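(* Let $F$ be a field, $V$ a nonzero vector space over $F$, $\Gamma$ a nonempty set, $\varphi:\Gamma\to\Gamma$ a map and $\mathfrak{w}\in F^\Gamma$, and let $\sigma_{\varphi,\mathfrak{w}}:V^\Gamma\to V^\Gamma$, $(x_\alpha)_{\alpha\in\Gamma}\mapsto(\mathfrak{w}_\alpha x_{\varphi(\alpha)})_{\alpha\in\Gamma}$. If $W(\varphi)\setminus\downarrow\mathfrak{Z}\neq\varnothing$, then $F\setminus\{0\}\subseteq{\rm Eigen}(\sigma_{\varphi,\mathfrak{w}},V^\Gamma)$; moreover in this case ${\rm Eigen}(\sigma_{\varphi,\mathfrak{w}},V^\Gamma)=F\setminus\{0\}$ if $\varphi(\Gamma\setminus\mathfrak{Z})=\Gamma$, and ${\rm Eigen}(\sigma_{\varphi,\mathfrak{w}},V^\Gamma)=F$ otherwise.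
   Context: For a linear map $T:W\to W$ on an $F$-vector space $W$, ${\rm Eigen}(T,W)$ is the set of all $r\in F$ such that $T(x)=rx$ for some nonzero $x\in W$. $\mathfrak{Z}:=\{\alpha\in\Gamma:\mathfrak{w}_\alpha=0\}$ and $\downarrow\mathfrak{Z}:=\bigcup_{n\geq0}\varphi^{-n}(\mathfrak{Z})$. A point $a\in\Gamma$ is wandering if the sequence $(\varphi^n(a))_{n\geq1}$ is one-to-one; $W(\varphi)$ is the set of wandering points. *)

theory Defs
  imports Complex_Main "HOL-Library.Function_Algebras"
begin

definition Eigen :: "('f \<Rightarrow> 'w \<Rightarrow> 'w::zero) \<Rightarrow> ('w \<Rightarrow> 'w) \<Rightarrow> 'w set \<Rightarrow> 'f set" where
  "Eigen sc T W = {r. \<exists>x\<in>W. x \<noteq> 0 \<and> T x = sc r x}"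

definition fscale :: "('f \<Rightarrow> 'v \<Rightarrow> 'v) \<Rightarrow> 'f \<Rightarrow> ('g \<Rightarrow> 'v) \<Rightarrow> ('g \<Rightarrow> 'v)" where
  "fscale sc r x = (\<lambda>\<alpha>. sc r (x \<alpha>))"

definition wshift :: "('f \<Rightarrow> 'v \<Rightarrow> 'v) \<Rightarrow> ('g \<Rightarrow> 'g) \<Rightarrow> ('g \<Rightarrow> 'f) \<Rightarrow> ('g \<Rightarrow> 'v) \<Rightarrow> ('g \<Rightarrow> 'v)" where
  "wshift sc \<phi> w x = (\<lambda>\<alpha>. sc (w \<alpha>) (x (\<phi> \<alpha>)))"

definition zeroset :: "('g \<Rightarrow> 'f::zero) \<Rightarrow> 'g set" where
  "zeroset w = {\<alpha>. w \<alpha> = 0}"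

definition downset :: "('g \<Rightarrow> 'g) \<Rightarrow> 'g set \<Rightarrow> 'g set" where
  "downset \<phi> Z = (\<Union>n::nat. (\<phi> ^^ n) -` Z)"

definition wandering :: "('g \<Rightarrow> 'g) \<Rightarrow> 'g set" where
  "wandering \<phi> = {a. inj_on (\<lambda>n::nat. (\<phi> ^^ n) a) {1..}}"

end

theory Submission
  imports Defs
begin

theorem lemma2p5:
  fixes sc :: "'f::field \<Rightarrow> 'v::ab_group_add \<Rightarrow> 'v"
    and \<phi> :: "'g \<Rightarrow> 'g" and w :: "'g \<Rightarrow> 'f"
  assumes "vector_space sc"
    and "\<exists>v::'v. v \<noteq> 0"
    and "wandering \<phi> - downset \<phi> (zeroset w) \<noteq> {}"
  shows "UNIV - {0} \<subseteq> Eigen (fscale sc) (wshift sc \<phi> w) UNIV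
    \<and> (\<phi> ` (UNIV - zeroset w) = UNIV \<longrightarrow> Eigen (fscale sc) (wshift sc \<phi> w) UNIV = UNIV - {0})
    \<and> (\<phi> ` (UNIV - zeroset w) \<noteq> UNIV \<longrightarrow> Eigen (fscale sc) (wshift sc \<phi> w) UNIV = UNIV)"
proof -
  interpret V: vector_space sc by (rule assms(1))
  obtain v :: 'v where v: "v \<noteq> 0" using assms(2) by blast
  obtain a0 where a0w: "a0 \<in> wandering \<phi>" and a0d: "a0 \<notin> downset \<phi> (zeroset w)"
    using assms(3) by blast
  define a where "a = (\<lambda>n. (\<phi>^^n) a0)"
  have ainj: "n = m" if "a n = a m" for n m
  proof -
    have "a (Suc n) = a (Suc m)" using that by (simp add: a_def)
    moreover have "inj_on a {1..}" using a0w by (simp add: wandering_def a_def)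
    ultimately show ?thesis by (auto dest: inj_onD)
  qed
  have wa: "w (a n) \<noteq> 0" for n using a0d by (auto simp: downset_def zeroset_def a_def)
  have aS: "\<phi> (a n) = a (Suc n)" for n by (simp add: a_def)
  have part1: "r \<in> Eigen (fscale sc) (wshift sc \<phi> w) UNIV" if r0: "r \<noteq> 0" for r
  proof -
    define h where "h k = r^k / (\<Prod>j<k. w (a j))" for k
    define idx where "idx \<beta> = (THE k. \<beta> = a k)" for \<beta>
    have idx: "idx (a k) = k" for k unfolding idx_def
      by (rule the_equality) (auto dest: ainj)
    define M where "M \<alpha> = (LEAST m. (\<phi>^^m) \<alpha> \<in> range a)" for \<alpha>
    define f where "f \<alpha> = (if \<exists>m. (\<phi>^^m) \<alpha> \<in> range a then
        (\<Prod>j<M \<alpha>. w ((\<phi>^^j) \<alpha>)) / r^(M \<alpha>) * h (idx ((\<phi>^^(M \<alpha>)) \<alpha>)) else 0)" for \<alpha>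
    define x where "x \<alpha> = sc (f \<alpha>) v" for \<alpha>
    have Ma: "M (a k) = 0" for k unfolding M_def by (rule Least_eq_0) auto
    have fa: "f (a k) = h k" for k
    proof -
      have "\<exists>m. (\<phi>^^m) (a k) \<in> range a" by (rule exI[of _ 0]) auto
      then show ?thesis by (simp add: f_def Ma idx)
    qed
    have "a0 = a 0" by (simp add: a_def)
    then have "x a0 = v" using fa[of 0] by (simp add: x_def h_def)
    then have xn0: "x \<noteq> 0" using v by (auto simp: zero_fun_def)
    have key: "w \<alpha> * f (\<phi> \<alpha>) = r * f \<alpha>" for \<alpha>
    proof (cases "\<exists>m. (\<phi>^^m) \<alpha> \<in> range a")
      case False
      then have "\<not> (\<exists>m. (\<phi>^^m) (\<phi> \<alpha>) \<in> range a)"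
        by (metis comp_apply funpow_Suc_right)
      then show ?thesis using False by (simp add: f_def)
    next
      case True
      show ?thesis
      proof (cases "M \<alpha>")
        case 0
        then have "\<alpha> \<in> range a" using LeastI_ex[OF True] by (simp add: M_def)
        then obtain k where k: "\<alpha> = a k" by blast
        have "w (a k) * h (Suc k) = r * h k"
          using wa[of k] by (simp add: h_def field_simps)
        then show ?thesis using k aS fa by simp
      next
        case (Suc m)
        have mem: "(\<phi>^^M \<alpha>) \<alpha> \<in> range a" using LeastI_ex[OF True] by (simp add: M_def)
        have eqm: "(\<phi>^^m) (\<phi> \<alpha>) = (\<phi>^^M \<alpha>) \<alpha>" using Suc
          by (simp add: funpow_Suc_right del: funpow.simps)
        have ex2: "\<exists>m. (\<phi>^^m) (\<phi> \<alpha>) \<in> range a" using eqm mem by metis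
        have M2: "M (\<phi> \<alpha>) = m" unfolding M_def
        proof (rule Least_equality)
          show "(\<phi>^^m) (\<phi> \<alpha>) \<in> range a" using eqm mem by simp
        next
          fix y assume "(\<phi>^^y) (\<phi> \<alpha>) \<in> range a"
          then have "(\<phi>^^Suc y) \<alpha> \<in> range a"
            by (simp add: funpow_Suc_right del: funpow.simps)
          then have "M \<alpha> \<le> Suc y" unfolding M_def by (rule Least_le)
          then show "m \<le> y" using Suc by simp
        qed
        have prod: "(\<Prod>j<M \<alpha>. w ((\<phi>^^j) \<alpha>)) = w \<alpha> * (\<Prod>j<m. w ((\<phi>^^j) (\<phi> \<alpha>)))"
          unfolding Suc prod.lessThan_Suc_shift
          by (simp add: funpow_Suc_right del: funpow.simps)
        define P where "P = (\<Prod>j<m. w ((\<phi>^^j) (\<phi> \<alpha>)))"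
        define H where "H = h (idx ((\<phi>^^M \<alpha>) \<alpha>))"
        have fA: "f \<alpha> = (w \<alpha> * P) / r^(M \<alpha>) * H"
          using True by (simp add: f_def prod P_def H_def)
        have fB: "f (\<phi> \<alpha>) = P / r^m * H"
          using ex2 by (simp add: f_def M2 eqm P_def H_def)
        have alg: "w \<alpha> * (P / r^m * H) = r * ((w \<alpha> * P) / r^(Suc m) * H)"
          using r0 by (simp add: field_simps)
        show ?thesis unfolding fA fB Suc using alg by simp
      qed
    qed
    have "wshift sc \<phi> w x = fscale sc r x"
      by (auto simp: wshift_def fscale_def x_def V.scale_scale key)
    then show ?thesis using xn0 by (auto simp: Eigen_def)
  qed
  have p2: "Eigen (fscale sc) (wshift sc \<phi> w) UNIV = UNIV - {0}"
    if surj: "\<phi> ` (UNIV - zeroset w) = UNIV"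
  proof -
    have "0 \<notin> Eigen (fscale sc) (wshift sc \<phi> w) UNIV"
    proof
      assume "0 \<in> Eigen (fscale sc) (wshift sc \<phi> w) UNIV"
      then obtain x :: "'g \<Rightarrow> 'v" where x0: "x \<noteq> 0" and ex: "wshift sc \<phi> w x = fscale sc 0 x"
        by (auto simp: Eigen_def)
      have "x \<beta> = 0" for \<beta>
      proof -
        obtain \<alpha> where "w \<alpha> \<noteq> 0" "\<beta> = \<phi> \<alpha>" using surj by (auto simp: zeroset_def)
        moreover have "sc (w \<alpha>) (x (\<phi> \<alpha>)) = 0" using fun_cong[OF ex, of \<alpha>]
          by (simp add: wshift_def fscale_def)
        ultimately show ?thesis by simp
      qed
      then show False using x0 by (auto simp: zero_fun_def)
    qed
    then show ?thesis using part1 by blast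
  qed
  have p3: "Eigen (fscale sc) (wshift sc \<phi> w) UNIV = UNIV"
    if ns: "\<phi> ` (UNIV - zeroset w) \<noteq> UNIV"
  proof -
    obtain \<beta> where b: "\<beta> \<notin> \<phi> ` (UNIV - zeroset w)" using ns by blast
    define x where "x \<alpha> = (if \<alpha> = \<beta> then v else 0)" for \<alpha>
    have "x \<noteq> 0" using v by (auto simp: x_def zero_fun_def fun_eq_iff)
    moreover have "wshift sc \<phi> w x = fscale sc 0 x"
    proof (rule ext)
      fix \<alpha>
      show "wshift sc \<phi> w x \<alpha> = fscale sc 0 x \<alpha>"
        using b by (auto simp: wshift_def fscale_def x_def zeroset_def image_iff)
    qed
    ultimately have "0 \<in> Eigen (fscale sc) (wshift sc \<phi> w) UNIV" by (auto simp: Eigen_def)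
    then show ?thesis using part1 by (metis UNIV_eq_I)
  qed
  show ?thesis using part1 p2 p3 by blast
qed

end
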